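(* Let $d>0$, let $\mathcal{S}$ be the 4-PAM constellation labeled by any Gray labeling, and let $\mathcal{B}\subset\{0,1\}^{2N}$ be a binary linear code with at least two codewords that contains codewords $\boldsymbol{b}'',\boldsymbol{b}'''$ such that $b''_1[k]=1$ for all $k$ and $b'''_2[k]=1$ for all $k$. Then $\mathsf{L}(\mathcal{B})=0$.
   Context: $\mathcal{S}=\{s_1,s_2,s_3,s_4\}$ with $s_1=-3d$, $s_2=-d$, $s_3=d$, $s_4=3d$. A labeling is a bijection $\Phi_{\mathcal{S}}:\{0,1\}^2\to\mathcal{S}$, described by $\boldsymbol{q}=[q_1,\dots,q_4]$ where $q_i$ is the integer whose two-bit representation $[b_1,b_2]$ (most significant bit first) is $\Phi_{\mathcal{S}}^{-1}(s_i)$; the Gray labelings are $[0,1,3,2]$, $[0,2,3,1]$, $[1,0,2,3]$, $[2,0,1,3]$. A codeword of $\mathcal{B}$ is written $\boldsymbol{b}=[\boldsymbol{b}[1],\dots,\boldsymbol{b}[N]]$ with $\boldsymbol{b}[k]=[b_1[k],b_2[k]]$, and the CM code is $\mathcal{X}=\{[\Phi_{\mathcal{S}}(\boldsymbol{b}[1]),\dots,\Phi_{\mathcal{S}}(\boldsymbol{b}[N])]:\boldsymbol{b}\in\mathcal{B}\}$. For $\boldsymbol{x},\hat{\boldsymbol{x}}\in\mathcal{S}^N$ and each $k$ with $x[k]\neq\hat{x}[k]$: $\mu^{\mathcal{X}}_k=\sigma^{2,\mathcal{X}}_k=(x[k]-\hat{x}[k])^2/(4d^2)$; $\mu^{\mathcal{B}}_k=\sigma^{2,\mathcal{B}}_k=(x[k]-\hat{x}[k])^2/(4d^2)$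 except that if $\{x[k],\hat{x}[k]\}=\{s_1,s_4\}$ then $\mu^{\mathcal{B}}_k=3$, $\sigma^{2,\mathcal{B}}_k=1$. Summing over $k$ with $x[k]\neq\hat{x}[k]$, $a^{\mathcal{X}}(\boldsymbol{x},\hat{\boldsymbol{x}})=\sum_k\mu^{\mathcal{X}}_k/\sqrt{\sum_k\sigma^{2,\mathcal{X}}_k}$ and $a^{\mathcal{B}}(\boldsymbol{x},\hat{\boldsymbol{x}})=\sum_k\mu^{\mathcal{B}}_k/\sqrt{\sum_k\sigma^{2,\mathcal{B}}_k}$ (normalized distances of the symbol-wise ML decoder and of the bit-wise max-log decoder under the zero-crossing approximation). The asymptotic loss of the code is $\mathsf{L}(\mathcal{B})=20\log_{10}\Big(\min_{\boldsymbol{x}\neq\hat{\boldsymbol{x}}\in\mathcal{X}}a^{\mathcal{X}}(\boldsymbol{x},\hat{\boldsymbol{x}})\big/\min_{\boldsymbol{x}\neq\hat{\boldsymbol{x}}\in\mathcal{X}}a^{\mathcal{B}}(\boldsymbol{x},\hat{\boldsymbol{x}})\Big)$ dB. *)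

theory Defs
  imports Complex_Main
begin

text \<open>Binary words of length N: a word is a map k \<mapsto> [b_1[k], b_2[k]] for k < N
  (indices 0..N-1 instead of 1..N), fixed to (False,False) for k \<ge> N.\<close>
definition words :: "nat \<Rightarrow> (nat \<Rightarrow> bool \<times> bool) set" where
  "words N = {b. \<forall>k\<ge>N. b k = (False, False)}"

definition bxor :: "(nat \<Rightarrow> bool \<times> bool) \<Rightarrow> (nat \<Rightarrow> bool \<times> bool) \<Rightarrow> nat \<Rightarrow> bool \<times> bool" where
  "bxor b c = (\<lambda>k. (fst (b k) \<noteq> fst (c k), snd (b k) \<noteq> snd (c k)))"

definition binary_linear_code :: "nat \<Rightarrow> (nat \<Rightarrow> bool \<times> bool) set \<Rightarrow> bool" where
  "binary_linear_code N B \<longleftrightarrow> B \<subseteq> words N \<and> (\<lambda>k. (False, False)) \<in> B \<and>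
     (\<forall>b\<in>B. \<forall>c\<in>B. bxor b c \<in> B)"

text \<open>4-PAM points s_1..s_4 (here indexed j = 0..3): s_{j+1} = (2j-3) d.\<close>
definition pam :: "real \<Rightarrow> nat \<Rightarrow> real" where
  "pam d j = (2 * real j - 3) * d"

definition gray_labelings :: "nat list set" where
  "gray_labelings = {[0,1,3,2], [0,2,3,1], [1,0,2,3], [2,0,1,3]}"

definition bitval :: "bool \<times> bool \<Rightarrow> nat" where
  "bitval b = 2 * of_bool (fst b) + of_bool (snd b)"

text \<open>Labeling \<Phi>_S determined by q: \<Phi>(b) = s_i where q_i = bitval b.\<close>
definition Phi :: "nat list \<Rightarrow> real \<Rightarrow> bool \<times> bool \<Rightarrow> real" where
  "Phi q d b = pam d (THE j. j < 4 \<and> q ! j = bitval b)"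

definition cm_code :: "nat list \<Rightarrow> real \<Rightarrow> nat \<Rightarrow> (nat \<Rightarrow> bool \<times> bool) set \<Rightarrow> (nat \<Rightarrow> real) set" where
  "cm_code q d N B = (\<lambda>b. (\<lambda>k. if k < N then Phi q d (b k) else 0)) ` B"

definition diffpos :: "nat \<Rightarrow> (nat \<Rightarrow> real) \<Rightarrow> (nat \<Rightarrow> real) \<Rightarrow> nat set" where
  "diffpos N x xh = {k. k < N \<and> x k \<noteq> xh k}"

definition muX :: "real \<Rightarrow> real \<Rightarrow> real \<Rightarrow> real" where
  "muX d a b = (a - b)^2 / (4 * d^2)"

definition sigX :: "real \<Rightarrow> real \<Rightarrow> real \<Rightarrow> real" where
  "sigX d a b = (a - b)^2 / (4 * d^2)"

definition muB :: "real \<Rightarrow> real \<Rightarrow> real \<Rightarrow> real" where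
  "muB d a b = (if {a, b} = {pam d 0, pam d 3} then 3 else (a - b)^2 / (4 * d^2))"

definition sigB :: "real \<Rightarrow> real \<Rightarrow> real \<Rightarrow> real" where
  "sigB d a b = (if {a, b} = {pam d 0, pam d 3} then 1 else (a - b)^2 / (4 * d^2))"

definition aX :: "real \<Rightarrow> nat \<Rightarrow> (nat \<Rightarrow> real) \<Rightarrow> (nat \<Rightarrow> real) \<Rightarrow> real" where
  "aX d N x xh = (\<Sum>k\<in>diffpos N x xh. muX d (x k) (xh k)) /
                 sqrt (\<Sum>k\<in>diffpos N x xh. sigX d (x k) (xh k))"

definition aB :: "real \<Rightarrow> nat \<Rightarrow> (nat \<Rightarrow> real) \<Rightarrow> (nat \<Rightarrow> real) \<Rightarrow> real" where
  "aB d N x xh = (\<Sum>k\<in>diffpos N x xh. muB d (x k) (xh k)) /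
                 sqrt (\<Sum>k\<in>diffpos N x xh. sigB d (x k) (xh k))"

definition asym_loss :: "nat list \<Rightarrow> real \<Rightarrow> nat \<Rightarrow> (nat \<Rightarrow> bool \<times> bool) set \<Rightarrow> real" where
  "asym_loss q d N B =
     (let X = cm_code q d N B in
      20 * log 10 (Min {aX d N x xh | x xh. x \<in> X \<and> xh \<in> X \<and> x \<noteq> xh} /
                   Min {aB d N x xh | x xh. x \<in> X \<and> xh \<in> X \<and> x \<noteq> xh}))"

end

theory Submission imports Defs begin

definition tab :: "nat list \<Rightarrow> bool \<times> bool \<Rightarrow> nat" where
  "tab q u = (if q!0 = bitval u then 0 else if q!1 = bitval u then 1 else if q!2 = bitval u then 2 else 3)"

lemma gray_cases: "q \<in> gray_labelings \<Longrightarrow> q = [0,1,3,2] \<or> q = [0,2,3,1] \<or> q = [1,0,2,3] \<or> q = [2,0,1,3]"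
  by (auto simp: gray_labelings_def)

lemma lt4: "(j::nat) < 4 \<longleftrightarrow> j = 0 \<or> j = 1 \<or> j = 2 \<or> j = 3" by auto

lemma Phi_tab: assumes "q \<in> gray_labelings" shows "Phi q d u = pam d (tab q u)"
proof -
  have "(THE j. j < 4 \<and> q ! j = bitval u) = tab q u"
    using gray_cases[OF assms]
    apply (cases u)
    apply (elim disjE; rule the_equality; cases "fst u"; cases "snd u"; auto simp: tab_def bitval_def lt4)
    done
  then show ?thesis by (simp add: Phi_def)
qed

lemma pam_eq: "d \<noteq> 0 \<Longrightarrow> pam d i = pam d j \<longleftrightarrow> i = j"
  by (auto simp: pam_def)

lemma pam_muX: "d \<noteq> 0 \<Longrightarrow> muX d (pam d i) (pam d j) = (real i - real j)^2"
  by (simp add: muX_def pam_def power2_eq_square field_simps)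

lemma pam_set: assumes "d \<noteq> 0"
  shows "({pam d i, pam d j} = {pam d 0, pam d 3}) \<longleftrightarrow> ({i,j} = {0,3::nat})"
proof -
  have inj: "inj (pam d)" using pam_eq[OF assms] by (auto intro: injI)
  have e: "{pam d i, pam d j} = pam d ` {i,j}" "{pam d 0, pam d 3} = pam d ` {0,3}" by auto
  show ?thesis unfolding e by (rule inj_image_eq_iff[OF inj])
qed

lemma pam_muB: "d \<noteq> 0 \<Longrightarrow> muB d (pam d i) (pam d j) = (if {i,j} = {0,3::nat} then 3 else (real i - real j)^2)"
  using pam_set[of d i j] pam_muX[of d i j] by (simp add: muB_def muX_def)

lemma pam_sigB: "d \<noteq> 0 \<Longrightarrow> sigB d (pam d i) (pam d j) = (if {i,j} = {0,3::nat} then 1 else (real i - real j)^2)"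
  using pam_set[of d i j] pam_muX[of d i j] by (simp add: sigB_def muX_def)

definition bx :: "bool \<times> bool \<Rightarrow> bool \<times> bool \<Rightarrow> bool \<times> bool" where
  "bx u v = (fst u \<noteq> fst v, snd u \<noteq> snd v)"

definition goodc :: "nat list \<Rightarrow> bool \<times> bool \<Rightarrow> bool" where
  "goodc q c \<longleftrightarrow> (q=[0,1,3,2] \<longrightarrow> snd c) \<and> (q=[0,2,3,1] \<longrightarrow> fst c) \<and> (q=[1,0,2,3] \<longrightarrow> \<not>snd c) \<and> (q=[2,0,1,3] \<longrightarrow> \<not> fst c)"

lemma bool2_cases: "(u::bool\<times>bool) = (False,False) \<or> u = (False,True) \<or> u = (True,False) \<or> u = (True,True)"
  by (cases u) auto

lemmas tabsimps = Phi_tab pam_muX pam_muB pam_sigB tab_def bitval_def doubleton_eq_iff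





lemma b2E: obtains "u = (False,False)" | "u = (False,True)" | "u = (True,False)" | "u = (True,True)"
  by (cases u) auto

lemma P_all:
  assumes q: "q \<in> gray_labelings" and d: "d \<noteq> 0"
  shows "sigB d (Phi q d u) (Phi q d v) \<le> muX d (Phi q d u) (Phi q d v) \<and>
    muX d (Phi q d u) (Phi q d v) \<le> 9 * sigB d (Phi q d u) (Phi q d v) \<and>
    muB d (Phi q d u) (Phi q d v) = (muX d (Phi q d u) (Phi q d v) + 3 * sigB d (Phi q d u) (Phi q d v)) / 4 \<and>
    sigB d (Phi q d u) (Phi q d v) \<le> muB d (Phi q d u) (Phi q d v) \<and>
    (Phi q d u = Phi q d v) = (u = v) \<and>
    (u \<noteq> v \<longrightarrow> sigB d (Phi q d u) (Phi q d v) > 0)"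
  using gray_cases[OF q]
  by (elim disjE; cases u rule: b2E; cases v rule: b2E; simp add: tabsimps pam_eq gray_labelings_def d)

lemma P5:
  assumes q: "q \<in> gray_labelings" and d: "d \<noteq> 0" and g: "goodc q c"
  shows "sigB d (Phi q d u) (Phi q d v) = muX d (Phi q d c) (Phi q d (bx c (bx u v)))"
  using gray_cases[OF q] g
  by (elim disjE; cases u rule: b2E; cases v rule: b2E; cases c rule: b2E; simp add: tabsimps bx_def goodc_def gray_labelings_def d)

lemma alg_ineq:
  fixes M S :: real
  assumes "S > 0" "S \<le> M" "M \<le> 9 * S"
  shows "((M + 3*S)/4) / sqrt S \<le> M / sqrt M"
proof -
  have M0: "M > 0" using assms by linarith
  have "M / sqrt M = sqrt M" using M0 by (simp add: real_div_sqrt)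
  have p: "(M - S) * (9*S - M) \<ge> 0" using assms by simp
  have e: "M * S - ((M + 3*S)/4)^2 = (M - S) * (9*S - M) / 16"
    by (simp add: power2_eq_square field_simps)
  have "((M + 3*S)/4)^2 \<le> M * S" using e p by linarith
  then have "(M + 3*S)/4 \<le> sqrt (M * S)" by (rule real_le_rsqrt)
  also have "\<dots> = sqrt M * sqrt S" by (simp add: real_sqrt_mult)
  finally have "((M + 3*S)/4) / sqrt S \<le> sqrt M"
    using assms(1) by (simp add: pos_divide_le_eq)
  with \<open>M / sqrt M = sqrt M\<close> show ?thesis by simp
qed

theorem corollary2:
  fixes d :: real and q :: "nat list" and N :: nat
    and B :: "(nat \<Rightarrow> bool \<times> bool) set"
  assumes "d > 0"
    and "q \<in> gray_labelings"
    and "binary_linear_code N B"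
    and "card B \<ge> 2"
    and "\<exists>b''\<in>B. \<forall>k<N. fst (b'' k)"
    and "\<exists>b'''\<in>B. \<forall>k<N. snd (b''' k)"
  shows "asym_loss q d N B = 0"
proof -
  have d0: "d \<noteq> 0" using assms(1) by simp
  note q = assms(2)
  have Bw: "B \<subseteq> words N" and B0: "(\<lambda>k. (False, False)) \<in> B"
    and Bx: "\<And>b c. b \<in> B \<Longrightarrow> c \<in> B \<Longrightarrow> bxor b c \<in> B"
    using assms(3) by (auto simp: binary_linear_code_def)
  define enc where "enc b = (\<lambda>k. if k < N then Phi q d (b k) else 0)" for b :: "nat \<Rightarrow> bool \<times> bool"
  have X: "cm_code q d N B = enc ` B" by (simp add: cm_code_def enc_def)
  have diffE: "diffpos N (enc b) (enc c) = {k. k < N \<and> b k \<noteq> c k}" for b c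
    using P_all[OF q d0] by (auto simp: diffpos_def enc_def)
  have encneq: "enc b \<noteq> enc c \<longleftrightarrow> (\<exists>k<N. b k \<noteq> c k)" for b c
  proof
    assume "enc b \<noteq> enc c"
    then obtain k where "enc b k \<noteq> enc c k" by auto
    then show "\<exists>k<N. b k \<noteq> c k" by (auto simp: enc_def split: if_splits)
  next
    assume "\<exists>k<N. b k \<noteq> c k"
    then obtain k where "k < N" "b k \<noteq> c k" by auto
    then have "enc b k \<noteq> enc c k" using P_all[OF q d0, of "b k" "c k"] by (simp add: enc_def)
    then show "enc b \<noteq> enc c" by auto
  qed
  obtain c0 where c0B: "c0 \<in> B" and c0g: "\<And>k. k < N \<Longrightarrow> goodc q (c0 k)"
  proof -
    obtain b2 where b2: "b2 \<in> B" "\<forall>k<N. fst (b2 k)" using assms(5) by auto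
    obtain b3 where b3: "b3 \<in> B" "\<forall>k<N. snd (b3 k)" using assms(6) by auto
    show ?thesis using gray_cases[OF q]
    proof (elim disjE)
      assume "q = [0,1,3,2]" then show ?thesis using that[of b3] b3 by (auto simp: goodc_def)
    next
      assume "q = [0,2,3,1]" then show ?thesis using that[of b2] b2 by (auto simp: goodc_def)
    next
      assume "q = [1,0,2,3]" then show ?thesis using that[of "\<lambda>k. (False,False)"] B0 by (auto simp: goodc_def)
    next
      assume "q = [2,0,1,3]" then show ?thesis using that[of "\<lambda>k. (False,False)"] B0 by (auto simp: goodc_def)
    qed
  qed
  have key: "aB d N (enc b) (enc c) \<le> aX d N (enc b) (enc c) \<and>
      (\<exists>c1\<in>B. enc c0 \<noteq> enc c1 \<and> aX d N (enc c0) (enc c1) \<le> aB d N (enc b) (enc c))"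
    if bB: "b \<in> B" and cB: "c \<in> B" and ne: "enc b \<noteq> enc c" for b c
  proof -
    define D where "D = {k. k < N \<and> b k \<noteq> c k}"
    have fD: "finite D" by (simp add: D_def)
    have neD: "D \<noteq> {}" using encneq[of b c] ne by (auto simp: D_def)
    define M where "M = (\<Sum>k\<in>D. muX d (enc b k) (enc c k))"
    define Mb where "Mb = (\<Sum>k\<in>D. muB d (enc b k) (enc c k))"
    define Sb where "Sb = (\<Sum>k\<in>D. sigB d (enc b k) (enc c k))"
    have aXe: "aX d N (enc b) (enc c) = M / sqrt M"
      by (simp add: aX_def diffE M_def D_def sigX_def muX_def)
    have aBe: "aB d N (enc b) (enc c) = Mb / sqrt Sb"
      by (simp add: aB_def diffE Mb_def Sb_def D_def)
    have S0: "Sb > 0" unfolding Sb_def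
      by (rule sum_pos[OF fD neD]) (use P_all[OF q d0] in \<open>auto simp: D_def enc_def\<close>)
    have SM: "Sb \<le> M" unfolding Sb_def M_def
      by (rule sum_mono) (use P_all[OF q d0] in \<open>auto simp: D_def enc_def\<close>)
    have M9: "M \<le> 9 * Sb" unfolding Sb_def M_def sum_distrib_left
      by (rule sum_mono) (use P_all[OF q d0] in \<open>auto simp: D_def enc_def\<close>)
    have "Mb = (\<Sum>k\<in>D. (muX d (enc b k) (enc c k) + 3 * sigB d (enc b k) (enc c k)) / 4)"
      unfolding Mb_def
      by (rule sum.cong) (use P_all[OF q d0] in \<open>auto simp: D_def enc_def\<close>)
    then have MbE: "Mb = (M + 3*Sb)/4" unfolding M_def Sb_def
      by (simp add: sum_divide_distrib[symmetric] sum.distrib sum_distrib_left)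
    have SMb: "Sb \<le> Mb" unfolding Sb_def Mb_def
      by (rule sum_mono) (use P_all[OF q d0] in \<open>auto simp: D_def enc_def\<close>)
    have i1: "aB d N (enc b) (enc c) \<le> aX d N (enc b) (enc c)"
      unfolding aXe aBe MbE using alg_ineq[OF S0 SM M9] .
    define c1 where "c1 = bxor c0 (bxor b c)"
    have c1B: "c1 \<in> B" unfolding c1_def using Bx bB cB c0B by blast
    have c1k: "c1 k = bx (c0 k) (bx (b k) (c k))" for k by (simp add: c1_def bxor_def bx_def)
    have Dc: "{k. k < N \<and> c0 k \<noteq> c1 k} = D"
      unfolding D_def c1k by (auto simp: bx_def prod_eq_iff)
    have ne1: "enc c0 \<noteq> enc c1" using encneq[of c0 c1] Dc neD by auto
    have M1: "(\<Sum>k\<in>D. muX d (enc c0 k) (enc c1 k)) = Sb" unfolding Sb_def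
      by (rule sum.cong) (auto simp: D_def enc_def c1k intro!: P5[OF q d0 c0g, symmetric])
    have "aX d N (enc c0) (enc c1) = Sb / sqrt Sb"
      using M1 by (simp add: aX_def diffE Dc sigX_def muX_def)
    also have "\<dots> \<le> Mb / sqrt Sb" using SMb S0 by (simp add: divide_right_mono)
    finally show ?thesis using i1 c1B ne1 aBe by auto
  qed
  have finB: "finite B" using assms(4) by (metis card.infinite not_numeral_le_zero)
  obtain b c where bc: "b \<in> B" "c \<in> B" "b \<noteq> c"
    using assms(4) card_le_Suc0_iff_eq[OF finB] by fastforce
  have encbc: "enc b \<noteq> enc c"
  proof -
    obtain k where k: "b k \<noteq> c k" using bc(3) by auto
    have "k < N"
    proof (rule ccontr)
      assume "\<not> k < N"
      then have "b k = (False,False)" "c k = (False,False)" using Bw bc(1,2) by (auto simp: words_def)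
      then show False using k by simp
    qed
    then show ?thesis using k encneq[of b c] by auto
  qed
  define A where "A = {aX d N x xh | x xh. x \<in> enc ` B \<and> xh \<in> enc ` B \<and> x \<noteq> xh}"
  define C where "C = {aB d N x xh | x xh. x \<in> enc ` B \<and> xh \<in> enc ` B \<and> x \<noteq> xh}"
  have fA: "finite A"
  proof -
    have "A \<subseteq> (\<lambda>(x,y). aX d N x y) ` (enc ` B \<times> enc ` B)" by (auto simp: A_def)
    then show ?thesis using finB finite_subset by blast
  qed
  have fC: "finite C"
  proof -
    have "C \<subseteq> (\<lambda>(x,y). aB d N x y) ` (enc ` B \<times> enc ` B)" by (auto simp: C_def)
    then show ?thesis using finB finite_subset by blast
  qed
  have neA: "A \<noteq> {}" using bc encbc unfolding A_def by blast
  have neC: "C \<noteq> {}" using bc encbc unfolding C_def by blast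
  have "Min A \<le> Min C"
  proof -
    have "Min C \<in> C" using fC neC by simp
    then obtain b c where bc: "b \<in> B" "c \<in> B" "enc b \<noteq> enc c" "Min C = aB d N (enc b) (enc c)"
      unfolding C_def by auto
    from key[OF bc(1-3)] obtain c1 where c1: "c1 \<in> B" "enc c0 \<noteq> enc c1"
      "aX d N (enc c0) (enc c1) \<le> Min C" using bc(4) by auto
    have "aX d N (enc c0) (enc c1) \<in> A" using c0B c1 unfolding A_def by blast
    then show ?thesis using fA c1(3) by (meson Min_le order_trans)
  qed
  moreover have "Min C \<le> Min A"
  proof -
    have "Min A \<in> A" using fA neA by simp
    then obtain b c where bc: "b \<in> B" "c \<in> B" "enc b \<noteq> enc c" "Min A = aX d N (enc b) (enc c)"
      unfolding A_def by auto
    have "aB d N (enc b) (enc c) \<in> C" using bc unfolding C_def by blast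
    then have "Min C \<le> aB d N (enc b) (enc c)" using fC by simp
    then show ?thesis using key[OF bc(1-3)] bc(4) by linarith
  qed
  ultimately have eq: "Min A = Min C" by simp
  show ?thesis unfolding asym_loss_def Let_def X A_def[symmetric] C_def[symmetric] eq
    by (cases "Min C = 0") (simp_all add: log_def)
qed

end
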